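(* Fix an undirected unweighted graph $G=(V,E)$ on $N$ vertices and $\delta\in[0,1]$. Let $r_1=1$ and $r_2\ge r_1$. There exists a coupling of two mixed $\delta$-updating chains $(S_t^{(1)})_{t\ge0}$ with mutant fitness $r_1$ and $(S_t^{(2)})_{t\ge0}$ with mutant fitness $r_2$, both started from the same $S_0\subseteq V$, such that $S_t^{(2)}\supseteq S_t^{(1)}$ for all $t\ge0$.
   Context: Mixed $\delta$-updating with mutant fitness $r$ on $G$: $S_t$ is the set of mutants after $t$ steps; each mutant has fitness $r$ and each wild-type fitness $1$; $f_S(x)$ is the fitness at $x$ when $S$ is the mutant set. At each step, with probability $\delta$ a death-Birth step: choose $v$ uniformly to die, choose a neighbor $u$ of $v$ with probability proportional to $f_S(u)$, $u$ copies its type onto $v$; with probability $1-\delta$ a Birth-death step: choose $u$ with probability proportional to $f_S(u)$ among all vertices, choose a uniformly random neighbor $v$ of $u$, $u$ copies its type onto $v$. *)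

theory Defs
  imports "HOL-Probability.Probability"
begin

definition nbrs :: "'a set \<Rightarrow> ('a \<Rightarrow> 'a \<Rightarrow> bool) \<Rightarrow> 'a \<Rightarrow> 'a set" where
  "nbrs V E x = {y \<in> V. E x y}"

definition fit :: "real \<Rightarrow> 'a set \<Rightarrow> 'a \<Rightarrow> real" where
  "fit r S x = (if x \<in> S then r else 1)"

definition wchoice :: "('a \<Rightarrow> real) \<Rightarrow> 'a set \<Rightarrow> 'a pmf" where
  "wchoice w A = embed_pmf (\<lambda>x. if x \<in> A then w x / (\<Sum>y\<in>A. w y) else 0)"

definition copy_type :: "'a set \<Rightarrow> 'a \<Rightarrow> 'a \<Rightarrow> 'a set" where
  "copy_type S u v = (if u \<in> S then insert v S else S - {v})"

definition dB_step :: "'a set \<Rightarrow> ('a \<Rightarrow> 'a \<Rightarrow> bool) \<Rightarrow> real \<Rightarrow> 'a set \<Rightarrow> 'a set pmf" where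
  "dB_step V E r S = bind_pmf (pmf_of_set V) (\<lambda>v.
     if nbrs V E v = {} then return_pmf S
     else bind_pmf (wchoice (fit r S) (nbrs V E v)) (\<lambda>u. return_pmf (copy_type S u v)))"

definition Bd_step :: "'a set \<Rightarrow> ('a \<Rightarrow> 'a \<Rightarrow> bool) \<Rightarrow> real \<Rightarrow> 'a set \<Rightarrow> 'a set pmf" where
  "Bd_step V E r S = bind_pmf (wchoice (fit r S) V) (\<lambda>u.
     if nbrs V E u = {} then return_pmf S
     else bind_pmf (pmf_of_set (nbrs V E u)) (\<lambda>v. return_pmf (copy_type S u v)))"

definition mixed_step :: "real \<Rightarrow> 'a set \<Rightarrow> ('a \<Rightarrow> 'a \<Rightarrow> bool) \<Rightarrow> real \<Rightarrow> 'a set \<Rightarrow> 'a set pmf" where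
  "mixed_step \<delta> V E r S = bind_pmf (bernoulli_pmf \<delta>) (\<lambda>b.
     if b then dB_step V E r S else Bd_step V E r S)"

text \<open>X is (on the probability space M) a Markov chain with kernel K started at S0:
  all finite-dimensional distributions are the ones of the chain.\<close>
definition is_markov_chain ::
  "'b measure \<Rightarrow> (nat \<Rightarrow> 'b \<Rightarrow> 's) \<Rightarrow> ('s \<Rightarrow> 's pmf) \<Rightarrow> 's \<Rightarrow> bool" where
  "is_markov_chain M X K s0 \<longleftrightarrow>
     (\<forall>t. X t \<in> measurable M (count_space UNIV)) \<and>
     (\<forall>n (hs :: 's list). length hs = Suc n \<longrightarrow>
        measure M {\<omega> \<in> space M. \<forall>i\<le>n. X i \<omega> = hs ! i}
        = (if hs ! 0 = s0 then 1 else 0) * (\<Prod>i<n. pmf (K (hs ! i)) (hs ! Suc i)))"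

end

theory Submission
  imports Defs
begin

lemma pmf_wchoice:
  assumes "finite A" "A \<noteq> {}" "\<And>x. x \<in> A \<Longrightarrow> w x > 0"
  shows "pmf (wchoice w A) x = (if x \<in> A then w x / (\<Sum>y\<in>A. w y) else 0)"
proof -
  have pos: "(\<Sum>y\<in>A. w y) > 0" using assms by (intro sum_pos) auto
  let ?f = "\<lambda>x. if x \<in> A then w x / (\<Sum>y\<in>A. w y) else 0"
  have nn: "\<And>x. 0 \<le> ?f x" using assms pos by (auto intro: less_imp_le)
  have "(\<integral>\<^sup>+x. ennreal (?f x) \<partial>count_space UNIV) = (\<Sum>x\<in>A. ennreal (?f x))"
    using assms by (intro nn_integral_count_space') auto
  also have "\<dots> = ennreal (\<Sum>x\<in>A. ?f x)" using nn by (intro sum_ennreal) (metis (no_types, lifting))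
  also have "(\<Sum>x\<in>A. ?f x) = (\<Sum>x\<in>A. w x / (\<Sum>y\<in>A. w y))" by simp
  also have "\<dots> = 1" using pos by (simp add: sum_divide_distrib[symmetric])
  finally have "(\<integral>\<^sup>+x. ennreal (?f x) \<partial>count_space UNIV) = 1" by simp
  then show ?thesis unfolding wchoice_def using nn by (subst pmf_embed_pmf) auto
qed

lemma set_wchoice:
  assumes "finite A" "A \<noteq> {}" "\<And>x. x \<in> A \<Longrightarrow> w x > 0"
  shows "set_pmf (wchoice w A) = A"
proof -
  have pos: "(\<Sum>y\<in>A. w y) > 0" using assms by (intro sum_pos) auto
  show ?thesis using assms pos by (force simp: set_pmf_iff pmf_wchoice[OF assms] split: if_splits)
qed

lemma prob_wchoice:
  assumes "finite A" "A \<noteq> {}" "\<And>x. x \<in> A \<Longrightarrow> w x > 0"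
  shows "measure_pmf.prob (wchoice w A) S = (\<Sum>y\<in>A \<inter> S. w y) / (\<Sum>y\<in>A. w y)"
proof -
  have "measure_pmf.prob (wchoice w A) S = measure_pmf.prob (wchoice w A) (S \<inter> A)"
    using measure_Int_set_pmf[of "wchoice w A" S] set_wchoice[OF assms] by simp
  also have "\<dots> = (\<Sum>y\<in>S \<inter> A. pmf (wchoice w A) y)"
    using assms by (simp add: measure_measure_pmf_finite)
  also have "\<dots> = (\<Sum>y\<in>S \<inter> A. w y / (\<Sum>y\<in>A. w y))"
    using assms by (intro sum.cong) (auto simp: pmf_wchoice)
  also have "\<dots> = (\<Sum>y\<in>A \<inter> S. w y) / (\<Sum>y\<in>A. w y)"
    by (simp add: sum_divide_distrib[symmetric] Int_commute)
  finally show ?thesis .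
qed

lemma wchoice_const:
  assumes "finite A" "A \<noteq> {}"
  shows "wchoice (\<lambda>_. 1) A = pmf_of_set A"
  by (rule pmf_eqI) (use assms in \<open>simp add: pmf_wchoice\<close>)

lemma fit1: "fit 1 S = (\<lambda>_. 1)" by (auto simp: fit_def)

lemma fit_pos: "r \<ge> 1 \<Longrightarrow> fit r S x > 0" by (auto simp: fit_def)

lemma map_mem_bernoulli:
  "map_pmf (\<lambda>u. u \<in> S) W = bernoulli_pmf (measure_pmf.prob W S)"
proof (rule pmf_eqI)
  fix b :: bool
  show "pmf (map_pmf (\<lambda>u. u \<in> S) W) b = pmf (bernoulli_pmf (measure_pmf.prob W S)) b"
  proof (cases b)
    case True
    have "(\<lambda>u. u \<in> S) -` {True} = S" by auto
    then show ?thesis using True by (simp add: pmf_map)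
  next
    case False
    have "(\<lambda>u. u \<in> S) -` {False} = UNIV - S" by auto
    then show ?thesis using False measure_pmf.prob_compl[of S W] by (simp add: pmf_map)
  qed
qed

lemma bool_coupling:
  assumes "0 \<le> p" "p \<le> q" "q \<le> 1"
  shows "\<exists>C. map_pmf fst C = bernoulli_pmf p \<and> map_pmf snd C = bernoulli_pmf q \<and>
             (\<forall>x\<in>set_pmf C. fst x \<longrightarrow> snd x)"
proof -
  define C where "C = bind_pmf (bernoulli_pmf q) (\<lambda>b. if b then map_pmf (\<lambda>c. (c, True)) (bernoulli_pmf (p / q)) else return_pmf (False, False))"
  have pq: "0 \<le> p / q" "p / q \<le> 1" using assms by (auto simp: divide_le_eq)
  have "map_pmf snd C = bind_pmf (bernoulli_pmf q) (\<lambda>b. return_pmf b)"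
    unfolding C_def map_bind_pmf by (intro bind_pmf_cong) (auto simp: pmf.map_comp o_def)
  also have "\<dots> = bernoulli_pmf q" by (simp add: bind_return_pmf')
  finally have 1: "map_pmf snd C = bernoulli_pmf q" .
  have "map_pmf fst C = bernoulli_pmf p"
  proof (rule pmf_eqI)
    fix b :: bool
    have "pmf (map_pmf fst C) b = (\<integral>x. pmf (if x then bernoulli_pmf (p/q) else return_pmf False) b \<partial>bernoulli_pmf q)"
      unfolding C_def map_bind_pmf pmf_bind
      by (intro Bochner_Integration.integral_cong) (auto simp: pmf.map_comp o_def)
    also have "\<dots> = pmf (bernoulli_pmf (p/q)) b * q + pmf (return_pmf False) b * (1 - q)"
      using assms by simp
    also have "\<dots> = pmf (bernoulli_pmf p) b"
      using assms pq by (cases b; cases "q = 0") (auto simp: field_simps)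
    finally show "pmf (map_pmf fst C) b = pmf (bernoulli_pmf p) b" .
  qed
  moreover have "\<forall>x\<in>set_pmf C. fst x \<longrightarrow> snd x" unfolding C_def by (auto split: if_splits)
  ultimately show ?thesis using 1 by blast
qed

lemma real_ineq:
  fixes a b c r :: real
  assumes "0 \<le> a" "a \<le> b" "0 \<le> c" "b + c > 0" "r \<ge> 1"
  shows "a / (b + c) \<le> r * b / (r * b + c)"
proof -
  have "a / (b + c) \<le> b / (b + c)" using assms by (intro divide_right_mono) auto
  also have "b / (b + c) \<le> r * b / (r * b + c)"
  proof -
    have "b * (r * b + c) \<le> r * b * (b + c)"
    proof -
      have "b * c * 1 \<le> b * c * r" using assms by (intro mult_left_mono) auto
      then show ?thesis by (simp add: algebra_simps)
    qed
    moreover have "r * b + c > 0" using assms mult_right_mono[of 1 r b] by simp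
    ultimately show ?thesis using assms by (simp add: divide_simps)
  qed
  finally show ?thesis .
qed

lemma sum_fit:
  assumes "finite N"
  shows "(\<Sum>y\<in>N. fit r B y) = r * card (N \<inter> B) + card (N - B)"
proof -
  have "(\<Sum>y\<in>N. fit r B y) = (\<Sum>y\<in>N \<inter> B. fit r B y) + (\<Sum>y\<in>N - B. fit r B y)"
    using assms by (simp add: sum.Int_Diff)
  also have "(\<Sum>y\<in>N \<inter> B. fit r B y) = r * card (N \<inter> B)" by (simp add: fit_def)
  also have "(\<Sum>y\<in>N - B. fit r B y) = card (N - B)" by (simp add: fit_def)
  finally show ?thesis .
qed

lemma sum_fit_Int:
  "(\<Sum>y\<in>N \<inter> B. fit r B y) = r * card (N \<inter> B)" by (simp add: fit_def)

lemma prob_mono_dB: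
  assumes "finite N" "N \<noteq> {}" "A \<subseteq> B" "r \<ge> 1"
  shows "measure_pmf.prob (wchoice (fit 1 A) N) A \<le> measure_pmf.prob (wchoice (fit r B) N) B"
proof -
  have "measure_pmf.prob (wchoice (fit 1 A) N) A = card (N \<inter> A) / card N"
    using assms by (simp add: fit1 wchoice_const measure_pmf_of_set)
  also have "card N = card (N \<inter> B) + card (N - B)"
    using assms by (metis card_Int_Diff)
  also have "measure_pmf.prob (wchoice (fit r B) N) B = r * card (N \<inter> B) / (r * card (N \<inter> B) + card (N - B))"
    using assms by (simp add: prob_wchoice fit_pos sum_fit sum_fit_Int)
  moreover have "card (N \<inter> A) \<le> card (N \<inter> B)"
    using assms by (intro card_mono) auto
  moreover have "card (N \<inter> B) + card (N - B) > 0" using assms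
    by (metis \<open>card N = card (N \<inter> B) + card (N - B)\<close> card_gt_0_iff)
  moreover have "real (card (N \<inter> B)) + real (card (N - B)) > 0"
    using \<open>card (N \<inter> B) + card (N - B) > 0\<close> by linarith
  ultimately show ?thesis using assms real_ineq[of "real (card (N \<inter> A))" "real (card (N \<inter> B))" "real (card (N - B))" r]
    by simp
qed

lemma copy_type_eq: "copy_type S u v = (if u \<in> S then insert v S else S - {v})"
  by (simp add: copy_type_def)

lemma dB_branch:
  "bind_pmf W (\<lambda>u. return_pmf (copy_type S u v)) =
   map_pmf (\<lambda>b. if b then insert v S else S - {v}) (bernoulli_pmf (measure_pmf.prob W S))"
proof -
  have "bind_pmf W (\<lambda>u. return_pmf (copy_type S u v)) =
        map_pmf ((\<lambda>b. if b then insert v S else S - {v}) \<circ> (\<lambda>u. u \<in> S)) W"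
    by (simp add: map_pmf_def o_def copy_type_eq)
  also have "\<dots> = map_pmf (\<lambda>b. if b then insert v S else S - {v}) (map_pmf (\<lambda>u. u \<in> S) W)"
    by (simp add: pmf.map_comp)
  finally show ?thesis by (simp add: map_mem_bernoulli)
qed

lemma finite_nbrs: "finite V \<Longrightarrow> finite (nbrs V E v)"
  by (simp add: nbrs_def)

lemma dB_coupling:
  assumes "finite V" "A \<subseteq> B" "r \<ge> 1"
  shows "\<exists>C. map_pmf fst C = dB_step V E 1 A \<and> map_pmf snd C = dB_step V E r B \<and>
             (\<forall>x\<in>set_pmf C. fst x \<subseteq> snd x)"
proof -
  let ?N = "nbrs V E"
  let ?g = "\<lambda>S v b. if b then insert v S else S - {v}"
  have "\<forall>v. \<exists>Cv. map_pmf fst Cv = (if ?N v = {} then return_pmf A else bind_pmf (wchoice (fit 1 A) (?N v)) (\<lambda>u. return_pmf (copy_type A u v)))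
     \<and> map_pmf snd Cv = (if ?N v = {} then return_pmf B else bind_pmf (wchoice (fit r B) (?N v)) (\<lambda>u. return_pmf (copy_type B u v)))
     \<and> (\<forall>x\<in>set_pmf Cv. fst x \<subseteq> snd x)"
  proof
    fix v
    show "\<exists>Cv. map_pmf fst Cv = (if ?N v = {} then return_pmf A else bind_pmf (wchoice (fit 1 A) (?N v)) (\<lambda>u. return_pmf (copy_type A u v)))
     \<and> map_pmf snd Cv = (if ?N v = {} then return_pmf B else bind_pmf (wchoice (fit r B) (?N v)) (\<lambda>u. return_pmf (copy_type B u v)))
     \<and> (\<forall>x\<in>set_pmf Cv. fst x \<subseteq> snd x)"
    proof (cases "?N v = {}")
      case True
      then show ?thesis using assms by (intro exI[of _ "return_pmf (A, B)"]) auto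
    next
      case False
      let ?p1 = "measure_pmf.prob (wchoice (fit 1 A) (?N v)) A"
      let ?p2 = "measure_pmf.prob (wchoice (fit r B) (?N v)) B"
      have "?p1 \<le> ?p2" using False assms by (intro prob_mono_dB finite_nbrs) auto
      then obtain Cb where Cb: "map_pmf fst Cb = bernoulli_pmf ?p1" "map_pmf snd Cb = bernoulli_pmf ?p2"
        "\<forall>x\<in>set_pmf Cb. fst x \<longrightarrow> snd x"
        using bool_coupling[of ?p1 ?p2] by auto
      define Cv where "Cv = map_pmf (\<lambda>x. (?g A v (fst x), ?g B v (snd x))) Cb"
      have "map_pmf fst Cv = map_pmf (?g A v) (map_pmf fst Cb)"
        unfolding Cv_def by (simp add: pmf.map_comp o_def)
      also have "\<dots> = bind_pmf (wchoice (fit 1 A) (?N v)) (\<lambda>u. return_pmf (copy_type A u v))"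
        by (simp add: Cb dB_branch)
      finally have 1: "map_pmf fst Cv = \<dots>" .
      have "map_pmf snd Cv = map_pmf (?g B v) (map_pmf snd Cb)"
        unfolding Cv_def by (simp add: pmf.map_comp o_def)
      also have "\<dots> = bind_pmf (wchoice (fit r B) (?N v)) (\<lambda>u. return_pmf (copy_type B u v))"
        by (simp add: Cb dB_branch)
      finally have 2: "map_pmf snd Cv = \<dots>" .
      have 3: "\<forall>x\<in>set_pmf Cv. fst x \<subseteq> snd x"
        unfolding Cv_def using Cb(3) assms by auto
      show ?thesis using 1 2 3 False by (intro exI[of _ Cv]) simp
    qed
  qed
  then obtain Cf where Cf: "\<And>v. map_pmf fst (Cf v) = (if ?N v = {} then return_pmf A else bind_pmf (wchoice (fit 1 A) (?N v)) (\<lambda>u. return_pmf (copy_type A u v)))"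
     "\<And>v. map_pmf snd (Cf v) = (if ?N v = {} then return_pmf B else bind_pmf (wchoice (fit r B) (?N v)) (\<lambda>u. return_pmf (copy_type B u v)))"
     "\<And>v. \<forall>x\<in>set_pmf (Cf v). fst x \<subseteq> snd x"
    by metis
  define C where "C = bind_pmf (pmf_of_set V) Cf"
  have "map_pmf fst C = dB_step V E 1 A"
    unfolding C_def dB_step_def map_bind_pmf Cf(1) by (intro bind_pmf_cong) auto
  moreover have "map_pmf snd C = dB_step V E r B"
    unfolding C_def dB_step_def map_bind_pmf Cf(2) by (intro bind_pmf_cong) auto
  moreover have "\<forall>x\<in>set_pmf C. fst x \<subseteq> snd x" unfolding C_def using Cf(3) by auto
  ultimately show ?thesis by blast
qed

lemma aux1: assumes "(b::real) > 0" "c \<ge> 0" shows "(1 + c / b) / (b + c) = 1 / b"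
proof -
  have "1 + c / b = (b + c) / b" using assms by (simp add: field_simps)
  moreover have "b + c \<noteq> 0" using assms by simp
  ultimately show ?thesis by simp
qed
lemma aux2: assumes "(b::real) > 0" "c \<ge> 0" "r * b + c > 0"
  shows "1 / (b + c) * ((b + c) / (r * b + c)) + 1 / b * (1 - (b + c) / (r * b + c)) = r / (r * b + c)"
proof -
  have bc: "b + c > 0" using assms by simp
  have "1 / (b + c) * ((b + c) / (r * b + c)) = 1 / (r * b + c)" using bc by simp
  moreover have "1 - (b + c) / (r * b + c) = (r * b - b) / (r * b + c)" using assms by (simp add: field_simps)
  moreover have "1 / b * ((r * b - b) / (r * b + c)) = (r - 1) / (r * b + c)"
  proof -
    have "r * b - b = b * (r - 1)" by (simp add: algebra_simps)
    then show ?thesis using assms by simp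
  qed
  ultimately show ?thesis by (simp add: add_divide_distrib[symmetric])
qed

lemma unif_mix:
  assumes "finite V" "B \<subseteq> V" "B \<noteq> {}"
  shows "bind_pmf (pmf_of_set V) (\<lambda>u. if u \<in> B then return_pmf u else pmf_of_set B) = pmf_of_set B"
proof (rule pmf_eqI)
  fix y
  have fB: "finite B" using assms finite_subset by auto
  have V0: "V \<noteq> {}" using assms by auto
  have "(\<Sum>u\<in>V. pmf (if u \<in> B then return_pmf u else pmf_of_set B) y)
      = (\<Sum>u\<in>B. pmf (return_pmf u) y) + (\<Sum>u\<in>V - B. pmf (pmf_of_set B) y)"
    using assms sum.subset_diff[of B V] by (simp add: sum.subset_diff[of B V])
  also have "(\<Sum>u\<in>B. pmf (return_pmf u) y) = (indicator B y :: real)"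
    using fB by (simp add: indicator_def)
  also have "(\<Sum>u\<in>V - B. pmf (pmf_of_set B) y) = card (V - B) * (indicator B y :: real) / card B"
    using assms fB by simp
  finally have eq: "(\<Sum>u\<in>V. pmf (if u \<in> B then return_pmf u else pmf_of_set B) y)
      = (indicator B y :: real) + card (V - B) * (indicator B y :: real) / card B" .
  have cV: "card V = card B + card (V - B)" using assms
    by (metis card_Diff_subset card_mono finite_subset le_add_diff_inverse)
  have cB: "card B > 0" using fB assms by auto
  have cVr: "real (card V) = real (card B) + real (card (V - B))" using cV by simp
  have cBr: "real (card B) > 0" using cB by simp
  have "pmf (bind_pmf (pmf_of_set V) (\<lambda>u. if u \<in> B then return_pmf u else pmf_of_set B)) y
     = ((indicator B y :: real) + card (V - B) * (indicator B y :: real) / card B) / card V"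
    using V0 assms by (simp add: pmf_bind_pmf_of_set eq)
  also have "\<dots> = (indicator B y :: real) / card B"
    unfolding cVr using cBr aux1[of "real (card B)" "real (card (V - B))"] by (cases "y \<in> B") simp_all
  finally show "pmf (bind_pmf (pmf_of_set V) (\<lambda>u. if u \<in> B then return_pmf u else pmf_of_set B)) y = pmf (pmf_of_set B) y"
    using assms fB by simp
qed

lemma wchoice_mix:
  fixes r :: real
  assumes "finite V" "B \<subseteq> V" "B \<noteq> {}" "r \<ge> 1"
  defines "\<alpha> \<equiv> card V / (r * card B + card (V - B))"
  shows "wchoice (fit r B) V = bind_pmf (bernoulli_pmf \<alpha>) (\<lambda>c. if c then pmf_of_set V else pmf_of_set B)"
    and "0 \<le> \<alpha>" "\<alpha> \<le> 1"
proof -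
  have fB: "finite B" using assms finite_subset by auto
  have V0: "V \<noteq> {}" using assms by auto
  have cV: "card V = card B + card (V - B)" using assms
    by (metis card_Diff_subset card_mono finite_subset le_add_diff_inverse)
  have cB: "card B > 0" using fB assms by auto
  define b where "b = real (card B)"
  define c where "c = real (card (V - B))"
  have b0: "b > 0" using cB b_def by simp
  have c0: "c \<ge> 0" using c_def by simp
  have rb: "r * b \<ge> b" using assms b0 mult_right_mono[of 1 r b] by simp
  have Z: "r * b + c > 0" using b0 c0 rb by linarith
  have al: "\<alpha> = (b + c) / (r * b + c)" unfolding \<alpha>_def b_def c_def cV by simp
  show a0: "0 \<le> \<alpha>" unfolding al using Z b0 c0 by simp
  show a1: "\<alpha> \<le> 1" unfolding al using divide_le_eq_1_pos[OF Z, of "b + c"] rb by simp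
  have sumV: "(\<Sum>y\<in>V. fit r B y) = r * b + c"
    using sum_fit[of V r B] assms unfolding b_def c_def by (simp add: Int_absorb1)
  show "wchoice (fit r B) V = bind_pmf (bernoulli_pmf \<alpha>) (\<lambda>c. if c then pmf_of_set V else pmf_of_set B)"
  proof (rule pmf_eqI)
    fix y
    have "pmf (bind_pmf (bernoulli_pmf \<alpha>) (\<lambda>c. if c then pmf_of_set V else pmf_of_set B)) y
        = pmf (pmf_of_set V) y * \<alpha> + pmf (pmf_of_set B) y * (1 - \<alpha>)"
      unfolding pmf_bind using a0 a1 by simp
    also have "\<dots> = indicator V y / (b + c) * \<alpha> + indicator B y / b * (1 - \<alpha>)"
      using V0 fB assms by (simp add: b_def c_def cV)
    also have "\<dots> = (if y \<in> V then fit r B y / (r * b + c) else 0)"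
      unfolding al using b0 c0 Z assms aux2[of b c r]
      by (cases "y \<in> B"; cases "y \<in> V") (auto simp: indicator_def fit_def add_pos_nonneg)
    also have "\<dots> = pmf (wchoice (fit r B) V) y"
      using V0 assms by (simp add: pmf_wchoice fit_pos sumV)
    finally show "pmf (wchoice (fit r B) V) y = pmf (bind_pmf (bernoulli_pmf \<alpha>) (\<lambda>c. if c then pmf_of_set V else pmf_of_set B)) y"
      by simp
  qed
qed

lemma U_coupling:
  fixes r :: real
  assumes "finite V" "V \<noteq> {}" "B \<subseteq> V" "r \<ge> 1"
  shows "\<exists>Cu. map_pmf fst Cu = pmf_of_set V \<and> map_pmf snd Cu = wchoice (fit r B) V \<and>
     (\<forall>x\<in>set_pmf Cu. fst x = snd x \<or> (fst x \<notin> B \<and> snd x \<in> B))"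
proof (cases "B = {}")
  case True
  have "fit r B = (\<lambda>_. 1)" using True by (auto simp: fit_def)
  then show ?thesis using assms
    by (intro exI[of _ "map_pmf (\<lambda>u. (u, u)) (pmf_of_set V)"])
       (auto simp: pmf.map_comp o_def wchoice_const)
next
  case False
  define \<alpha> where "\<alpha> = card V / (r * card B + card (V - B))"
  note mix = wchoice_mix[OF assms(1,3) False assms(4), folded \<alpha>_def]
  define Cu where "Cu = bind_pmf (bernoulli_pmf \<alpha>) (\<lambda>c. if c then map_pmf (\<lambda>u. (u, u)) (pmf_of_set V)
     else bind_pmf (pmf_of_set V) (\<lambda>u1. if u1 \<in> B then return_pmf (u1, u1) else map_pmf (Pair u1) (pmf_of_set B)))"
  have "map_pmf fst Cu = bind_pmf (bernoulli_pmf \<alpha>) (\<lambda>c. pmf_of_set V)"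
    unfolding Cu_def map_bind_pmf
  proof (intro bind_pmf_cong refl)
    fix c
    have "bind_pmf (pmf_of_set V) (\<lambda>x. map_pmf fst (if x \<in> B then return_pmf (x, x) else map_pmf (Pair x) (pmf_of_set B)))
        = bind_pmf (pmf_of_set V) return_pmf"
      by (intro bind_pmf_cong) (auto simp: pmf.map_comp o_def)
    then show "map_pmf fst (if c then map_pmf (\<lambda>u. (u, u)) (pmf_of_set V)
     else bind_pmf (pmf_of_set V) (\<lambda>u1. if u1 \<in> B then return_pmf (u1, u1) else map_pmf (Pair u1) (pmf_of_set B)))
      = pmf_of_set V"
      by (auto simp: pmf.map_comp o_def map_bind_pmf bind_return_pmf')
  qed
  then have 1: "map_pmf fst Cu = pmf_of_set V" by simp
  have "map_pmf snd Cu = bind_pmf (bernoulli_pmf \<alpha>) (\<lambda>c. if c then pmf_of_set V else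
        bind_pmf (pmf_of_set V) (\<lambda>u. if u \<in> B then return_pmf u else pmf_of_set B))"
    unfolding Cu_def map_bind_pmf
  proof (intro bind_pmf_cong refl)
    fix c
    have "bind_pmf (pmf_of_set V) (\<lambda>x. map_pmf snd (if x \<in> B then return_pmf (x, x) else map_pmf (Pair x) (pmf_of_set B)))
        = bind_pmf (pmf_of_set V) (\<lambda>u. if u \<in> B then return_pmf u else pmf_of_set B)"
      by (intro bind_pmf_cong) (auto simp: pmf.map_comp o_def)
    then show "map_pmf snd (if c then map_pmf (\<lambda>u. (u, u)) (pmf_of_set V)
     else bind_pmf (pmf_of_set V) (\<lambda>u1. if u1 \<in> B then return_pmf (u1, u1) else map_pmf (Pair u1) (pmf_of_set B)))
      = (if c then pmf_of_set V else bind_pmf (pmf_of_set V) (\<lambda>u. if u \<in> B then return_pmf u else pmf_of_set B))"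
      by (auto simp: pmf.map_comp o_def map_bind_pmf)
  qed
  also have "\<dots> = bind_pmf (bernoulli_pmf \<alpha>) (\<lambda>c. if c then pmf_of_set V else pmf_of_set B)"
    by (simp only: unif_mix[OF assms(1,3) False])
  also have "\<dots> = wchoice (fit r B) V" using mix(1) by simp
  finally have 2: "map_pmf snd Cu = wchoice (fit r B) V" .
  have 3: "\<forall>x\<in>set_pmf Cu. fst x = snd x \<or> (fst x \<notin> B \<and> snd x \<in> B)"
    unfolding Cu_def using assms False finite_subset[OF assms(3,1)] by (auto split: if_splits)
  show ?thesis using 1 2 3 by blast
qed

lemma Bd_coupling:
  fixes r :: real
  assumes "finite V" "V \<noteq> {}" "A \<subseteq> B" "B \<subseteq> V" "r \<ge> 1"
  shows "\<exists>C. map_pmf fst C = Bd_step V E 1 A \<and> map_pmf snd C = Bd_step V E r B \<and>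
             (\<forall>x\<in>set_pmf C. fst x \<subseteq> snd x)"
proof -
  let ?N = "nbrs V E"
  define F where "F = (\<lambda>S u. if ?N u = {} then return_pmf S
     else bind_pmf (pmf_of_set (?N u)) (\<lambda>v. return_pmf (copy_type S u v)))"
  define G where "G = (\<lambda>u. if ?N u = {} then return_pmf (A, B)
     else bind_pmf (pmf_of_set (?N u)) (\<lambda>v. return_pmf (copy_type A u v, copy_type B u v)))"
  have Bd: "\<And>r S. Bd_step V E r S = bind_pmf (wchoice (fit r S) V) (F S)"
    unfolding Bd_step_def F_def by simp
  obtain Cu where Cu: "map_pmf fst Cu = pmf_of_set V" "map_pmf snd Cu = wchoice (fit r B) V"
     "\<forall>x\<in>set_pmf Cu. fst x = snd x \<or> (fst x \<notin> B \<and> snd x \<in> B)"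
    using U_coupling[OF assms(1,2,4,5)] by blast
  define C where "C = bind_pmf Cu (\<lambda>x. if fst x = snd x then G (fst x) else pair_pmf (F A (fst x)) (F B (snd x)))"
  have mG1: "map_pmf fst (G u) = F A u" for u
    unfolding G_def F_def by (auto simp: map_bind_pmf)
  have mG2: "map_pmf snd (G u) = F B u" for u
    unfolding G_def F_def by (auto simp: map_bind_pmf)
  have "map_pmf fst C = bind_pmf Cu (\<lambda>x. F A (fst x))"
    unfolding C_def map_bind_pmf
    by (intro bind_pmf_cong) (auto simp: mG1 map_fst_pair_pmf)
  also have "\<dots> = bind_pmf (map_pmf fst Cu) (F A)" by (simp add: bind_map_pmf)
  also have "\<dots> = Bd_step V E 1 A" using assms by (simp add: Cu Bd fit1 wchoice_const)
  finally have 1: "map_pmf fst C = Bd_step V E 1 A" .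
  have "map_pmf snd C = bind_pmf Cu (\<lambda>x. F B (snd x))"
    unfolding C_def map_bind_pmf
    by (intro bind_pmf_cong) (auto simp: mG2 map_snd_pair_pmf)
  also have "\<dots> = bind_pmf (map_pmf snd Cu) (F B)" by (simp add: bind_map_pmf)
  also have "\<dots> = Bd_step V E r B" by (simp add: Cu Bd)
  finally have 2: "map_pmf snd C = Bd_step V E r B" .
  have FA: "\<And>u y. u \<notin> A \<Longrightarrow> y \<in> set_pmf (F A u) \<Longrightarrow> y \<subseteq> A"
    unfolding F_def copy_type_def by (auto split: if_splits)
  have FB: "\<And>u y. u \<in> B \<Longrightarrow> y \<in> set_pmf (F B u) \<Longrightarrow> B \<subseteq> y"
    unfolding F_def copy_type_def by (auto split: if_splits)
  have GG: "\<And>u y. y \<in> set_pmf (G u) \<Longrightarrow> fst y \<subseteq> snd y"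
    unfolding G_def copy_type_def using assms by (auto split: if_splits)
  have 3: "\<forall>x\<in>set_pmf C. fst x \<subseteq> snd x"
  proof
    fix y assume "y \<in> set_pmf C"
    then obtain x where x: "x \<in> set_pmf Cu"
      and y: "y \<in> set_pmf (if fst x = snd x then G (fst x) else pair_pmf (F A (fst x)) (F B (snd x)))"
      unfolding C_def by auto
    show "fst y \<subseteq> snd y"
    proof (cases "fst x = snd x")
      case True then show ?thesis using y GG by auto
    next
      case False
      then have "fst x \<notin> B" "snd x \<in> B" using Cu(3) x by auto
      then have "fst x \<notin> A" using assms by auto
      then show ?thesis using y False FA FB \<open>snd x \<in> B\<close> assms(3) by fastforce
    qed
  qed
  show ?thesis using 1 2 3 by blast
qed

lemma mixed_coupling:
  fixes r :: real
  assumes "finite V" "V \<noteq> {}" "A \<subseteq> B" "B \<subseteq> V" "r \<ge> 1"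
  shows "\<exists>C. map_pmf fst C = mixed_step \<delta> V E 1 A \<and> map_pmf snd C = mixed_step \<delta> V E r B \<and>
             (\<forall>x\<in>set_pmf C. fst x \<subseteq> snd x)"
proof -
  obtain Cd where Cd: "map_pmf fst Cd = dB_step V E 1 A" "map_pmf snd Cd = dB_step V E r B"
    "\<forall>x\<in>set_pmf Cd. fst x \<subseteq> snd x"
    using dB_coupling[OF assms(1,3,5)] by blast
  obtain Cb where Cb: "map_pmf fst Cb = Bd_step V E 1 A" "map_pmf snd Cb = Bd_step V E r B"
    "\<forall>x\<in>set_pmf Cb. fst x \<subseteq> snd x"
    using Bd_coupling[OF assms(1-5)] by blast
  define C where "C = bind_pmf (bernoulli_pmf \<delta>) (\<lambda>b. if b then Cd else Cb)"
  have "map_pmf fst C = mixed_step \<delta> V E 1 A"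
    unfolding C_def mixed_step_def map_bind_pmf by (intro bind_pmf_cong) (auto simp: Cd Cb)
  moreover have "map_pmf snd C = mixed_step \<delta> V E r B"
    unfolding C_def mixed_step_def map_bind_pmf by (intro bind_pmf_cong) (auto simp: Cd Cb)
  moreover have "\<forall>x\<in>set_pmf C. fst x \<subseteq> snd x" unfolding C_def using Cd Cb by auto
  ultimately show ?thesis by blast
qed

lemma set_mixed_step:
  assumes "finite V" "V \<noteq> {}" "S \<subseteq> V" "T \<in> set_pmf (mixed_step \<delta> V E r S)"
  shows "T \<subseteq> V"
proof -
  have fN: "\<And>u. finite (nbrs V E u)" using assms by (simp add: finite_nbrs)
  have NV: "\<And>u. nbrs V E u \<subseteq> V" by (auto simp: nbrs_def)
  have "T \<in> set_pmf (dB_step V E r S) \<or> T \<in> set_pmf (Bd_step V E r S)"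
    using assms(4) unfolding mixed_step_def by (auto split: if_splits)
  then show ?thesis
  proof
    assume "T \<in> set_pmf (dB_step V E r S)"
    then show ?thesis using assms unfolding dB_step_def copy_type_def by (auto split: if_splits)
  next
    assume "T \<in> set_pmf (Bd_step V E r S)"
    then obtain u where u: "T \<in> set_pmf (if nbrs V E u = {} then return_pmf S
     else bind_pmf (pmf_of_set (nbrs V E u)) (\<lambda>v. return_pmf (copy_type S u v)))"
      unfolding Bd_step_def by auto
    have "T = S \<or> (\<exists>v\<in>nbrs V E u. T = copy_type S u v)"
    proof (cases "nbrs V E u = {}")
      case True then show ?thesis using u by simp
    next
      case False then show ?thesis using u fN[of u] by (auto simp: set_pmf_of_set)
    qed
    then show ?thesis using assms NV unfolding copy_type_def by (auto split: if_splits)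
  qed
qed

definition clamp :: "'s set \<Rightarrow> 's \<Rightarrow> ('s \<Rightarrow> 's) \<Rightarrow> 's \<Rightarrow> 's" where
  "clamp \<Sigma> d f x = (if f x \<in> \<Sigma> then f x else d)"

primrec path :: "'s set \<Rightarrow> 's \<Rightarrow> 's \<Rightarrow> ('s \<Rightarrow> 's) stream \<Rightarrow> nat \<Rightarrow> 's" where
  "path \<Sigma> d s \<omega> 0 = s"
| "path \<Sigma> d s \<omega> (Suc n) = path \<Sigma> d (clamp \<Sigma> d (shd \<omega>) s) (stl \<omega>) n"

lemma clamp_in: "d \<in> \<Sigma> \<Longrightarrow> clamp \<Sigma> d f x \<in> \<Sigma>"
  by (simp add: clamp_def)

lemma path_in: "s \<in> \<Sigma> \<Longrightarrow> d \<in> \<Sigma> \<Longrightarrow> path \<Sigma> d s \<omega> n \<in> \<Sigma>"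
  by (induction n arbitrary: s \<omega>) (auto simp: clamp_in)

lemma path_meas:
  assumes "finite \<Sigma>" "d \<in> \<Sigma>" "s \<in> \<Sigma>"
  shows "(\<lambda>\<omega>. path \<Sigma> d s \<omega> n) \<in> measurable (stream_space (measure_pmf D)) (count_space UNIV)"
  using assms(3)
proof (induction n arbitrary: s)
  case 0
  then show ?case by simp
next
  case (Suc n)
  have g: "(\<lambda>\<omega>. clamp \<Sigma> d (shd \<omega>) s) \<in> measurable (stream_space (measure_pmf D)) (count_space \<Sigma>)"
  proof (rule measurable_compose[OF measurable_shd])
    show "(\<lambda>f. clamp \<Sigma> d f s) \<in> measurable (measure_pmf D) (count_space \<Sigma>)"
      using assms by (simp add: clamp_in)
  qed
  have f: "\<And>i. i \<in> \<Sigma> \<Longrightarrow> (\<lambda>\<omega>. path \<Sigma> d i (stl \<omega>) n) \<in> measurable (stream_space (measure_pmf D)) (count_space UNIV)"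
    using Suc.IH by (rule measurable_compose[OF measurable_stl])
  show ?case
    using measurable_compose_countable'[OF f g] assms(1) by (simp add: countable_finite)
qed

lemma space_stream_pmf: "space (stream_space (measure_pmf D)) = UNIV"
  by (simp add: space_stream_space)

lemma fdd:
  fixes \<pi> :: "'s \<Rightarrow> 't" and K :: "'t \<Rightarrow> 't pmf"
  assumes fin: "finite \<Sigma>" and d: "d \<in> \<Sigma>"
    and hK: "\<And>s. s \<in> \<Sigma> \<Longrightarrow> map_pmf (\<lambda>f. \<pi> (clamp \<Sigma> d f s)) D = K (\<pi> s)"
  shows "s \<in> \<Sigma> \<Longrightarrow> length hs = Suc n \<Longrightarrow>
    emeasure (stream_space (measure_pmf D)) {\<omega> \<in> space (stream_space (measure_pmf D)). \<forall>i\<le>n. \<pi> (path \<Sigma> d s \<omega> i) = hs ! i}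
    = ennreal ((if \<pi> s = hs ! 0 then 1 else 0) * (\<Prod>i<n. pmf (K (hs ! i)) (hs ! Suc i)))"
proof (induction n arbitrary: s hs)
  case 0
  interpret S: prob_space "stream_space (measure_pmf D)"
    by (rule prob_space.prob_space_stream_space[OF measure_pmf.prob_space_axioms])
  show ?case
  proof (cases "\<pi> s = hs ! 0")
    case True
    then have "{\<omega> \<in> space (stream_space (measure_pmf D)). \<forall>i\<le>0. \<pi> (path \<Sigma> d s \<omega> i) = hs ! i}
       = space (stream_space (measure_pmf D))" by auto
    then show ?thesis using True by (simp add: S.emeasure_space_1)
  next
    case False
    then have eq: "{\<omega> \<in> space (stream_space (measure_pmf D)). \<forall>i\<le>0. \<pi> (path \<Sigma> d s \<omega> i) = hs ! i} = {}"
      by auto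
    show ?thesis using False by (simp only: eq emeasure_empty) simp
  qed
next
  case (Suc n)
  obtain h hs' where hs: "hs = h # hs'" and len: "length hs' = Suc n"
    using Suc.prems(2) by (cases hs) auto
  let ?S = "stream_space (measure_pmf D)"
  let ?X = "{\<omega> \<in> space ?S. \<forall>i\<le>Suc n. \<pi> (path \<Sigma> d s \<omega> i) = hs ! i}"
  have pm: "\<And>i. (\<lambda>\<omega>. path \<Sigma> d s \<omega> i) \<in> measurable ?S (count_space UNIV)"
    using fin d Suc.prems(1) by (rule path_meas)
  have Pi: "{\<omega> \<in> space ?S. \<pi> (path \<Sigma> d s \<omega> i) = hs ! i} \<in> sets ?S" for i
  proof -
    have "{\<omega> \<in> space ?S. \<pi> (path \<Sigma> d s \<omega> i) = hs ! i} = (\<lambda>\<omega>. path \<Sigma> d s \<omega> i) -` {x. \<pi> x = hs ! i} \<inter> space ?S"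
      by auto
    then show ?thesis using measurable_sets[OF pm[of i], of "{x. \<pi> x = hs ! i}"] by simp
  qed
  have "?X = (\<Inter>i\<in>{..Suc n}. {\<omega> \<in> space ?S. \<pi> (path \<Sigma> d s \<omega> i) = hs ! i})" by auto
  then have Xm: "?X \<in> sets ?S" using Pi by (auto intro!: sets.finite_INT)
  define Q where "Q = (\<Prod>i<n. pmf (K (hs' ! i)) (hs' ! Suc i))"
  have Q0: "Q \<ge> 0" unfolding Q_def by (intro prod_nonneg) auto
  have sec: "{x \<in> space ?S. t ## x \<in> ?X} =
     (if \<pi> s = h then {x \<in> space ?S. \<forall>i\<le>n. \<pi> (path \<Sigma> d (clamp \<Sigma> d t s) x i) = hs' ! i} else {})" for t
  proof -
    have "(\<forall>i\<le>Suc n. \<pi> (path \<Sigma> d s (t ## x) i) = hs ! i) \<longleftrightarrow>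
          \<pi> s = h \<and> (\<forall>i\<le>n. \<pi> (path \<Sigma> d (clamp \<Sigma> d t s) x i) = hs' ! i)" for x
    proof -
      have "(\<forall>i\<le>Suc n. \<pi> (path \<Sigma> d s (t ## x) i) = hs ! i) \<longleftrightarrow>
            \<pi> (path \<Sigma> d s (t ## x) 0) = hs ! 0 \<and> (\<forall>i\<le>n. \<pi> (path \<Sigma> d s (t ## x) (Suc i)) = hs ! Suc i)"
        by (metis (no_types, lifting) Suc_le_mono le0 not0_implies_Suc)
      then show ?thesis by (simp add: hs)
    qed
    then show ?thesis by (auto simp: space_stream_pmf)
  qed
  have "emeasure ?S ?X = (\<integral>\<^sup>+t. emeasure ?S {x \<in> space ?S. t ## x \<in> ?X} \<partial>measure_pmf D)"
    using Xm by (rule prob_space.emeasure_stream_space[OF measure_pmf.prob_space_axioms])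
  also have "\<dots> = (\<integral>\<^sup>+t. (if \<pi> s = h then ennreal ((if \<pi> (clamp \<Sigma> d t s) = hs' ! 0 then 1 else 0) * Q) else 0) \<partial>measure_pmf D)"
    unfolding sec Q_def
    by (intro nn_integral_cong) (auto simp: Suc.IH[OF clamp_in[OF d] len])
  also have "\<dots> = (if \<pi> s = h then ennreal (pmf (K (\<pi> s)) (hs' ! 0) * Q) else 0)"
  proof (cases "\<pi> s = h")
    case True
    have "(\<integral>\<^sup>+t. ennreal ((if \<pi> (clamp \<Sigma> d t s) = hs' ! 0 then 1 else 0) * Q) \<partial>measure_pmf D)
        = (\<integral>\<^sup>+t. ennreal Q * indicator ((\<lambda>f. \<pi> (clamp \<Sigma> d f s)) -` {hs' ! 0}) t \<partial>measure_pmf D)"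
      by (intro nn_integral_cong) (auto simp: indicator_def)
    also have "\<dots> = ennreal Q * emeasure (measure_pmf D) ((\<lambda>f. \<pi> (clamp \<Sigma> d f s)) -` {hs' ! 0})"
      by (simp add: nn_integral_cmult_indicator)
    also have "emeasure (measure_pmf D) ((\<lambda>f. \<pi> (clamp \<Sigma> d f s)) -` {hs' ! 0})
        = ennreal (pmf (map_pmf (\<lambda>f. \<pi> (clamp \<Sigma> d f s)) D) (hs' ! 0))"
      by (simp add: pmf_map measure_pmf.emeasure_eq_measure)
    also have "\<dots> = ennreal (pmf (K (\<pi> s)) (hs' ! 0))" using hK[OF Suc.prems(1)] by simp
    finally show ?thesis using True Q0 by (simp add: ennreal_mult mult.commute)
  qed simp
  also have "\<dots> = ennreal ((if \<pi> s = hs ! 0 then 1 else 0) * (\<Prod>i<Suc n. pmf (K (hs ! i)) (hs ! Suc i)))"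
    unfolding prod.lessThan_Suc_shift Q_def by (simp add: hs)
  finally show ?case .
qed

abbreviation "PS \<equiv> PiM (UNIV :: nat set) (\<lambda>_. count_space UNIV)"

lemma pi_set: "{\<omega> \<in> space PS. P (\<omega> t)} \<in> sets PS"
proof -
  have m: "(\<lambda>\<omega>. \<omega> t) \<in> measurable PS (count_space UNIV)"
    by (rule measurable_component_singleton) simp
  have "{\<omega> \<in> space PS. P (\<omega> t)} = (\<lambda>\<omega>. \<omega> t) -` {x. P x} \<inter> space PS" by auto
  then show ?thesis using measurable_sets[OF m, of "{x. P x}"] by simp
qed

lemma pi_set_fin: "{\<omega> \<in> space PS. \<forall>i\<le>n. P i (\<omega> i)} \<in> sets PS"
proof -
  have "{\<omega> \<in> space PS. \<forall>i\<le>n. P i (\<omega> i)} = (\<Inter>i\<in>{..n}. {\<omega> \<in> space PS. P i (\<omega> i)})" by auto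
  also have "\<dots> \<in> sets PS" by (rule sets.finite_INT) (simp_all add: pi_set)
  finally show ?thesis .
qed

lemma pi_set_all: "{\<omega> \<in> space PS. \<forall>i. P i (\<omega> i)} \<in> sets PS"
proof -
  have "{\<omega> \<in> space PS. \<forall>i. P i (\<omega> i)} = (\<Inter>i\<in>UNIV. {\<omega> \<in> space PS. P i (\<omega> i)})" by auto
  also have "\<dots> \<in> sets PS" by (rule sets.countable_INT') (auto simp: pi_set)
  finally show ?thesis .
qed

lemma chain_from_stream:
  fixes \<pi> :: "'s \<Rightarrow> 't" and K :: "'t \<Rightarrow> 't pmf"
  assumes fin: "finite \<Sigma>" and d: "d \<in> \<Sigma>"
    and hK: "\<And>s. s \<in> \<Sigma> \<Longrightarrow> map_pmf (\<lambda>f. \<pi> (clamp \<Sigma> d f s)) D = K (\<pi> s)"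
  defines "M \<equiv> distr (stream_space (measure_pmf D)) PS (\<lambda>\<omega> t. path \<Sigma> d d \<omega> t)"
  shows "is_markov_chain M (\<lambda>t \<omega>. \<pi> (\<omega> t)) K (\<pi> d)"
proof -
  let ?S = "stream_space (measure_pmf D)"
  interpret S: prob_space ?S
    by (rule prob_space.prob_space_stream_space[OF measure_pmf.prob_space_axioms])
  have fm: "(\<lambda>\<omega> t. path \<Sigma> d d \<omega> t) \<in> measurable ?S PS"
    by (rule measurable_PiM_single') (simp_all add: path_meas[OF fin d d])
  have 1: "\<forall>t. (\<lambda>\<omega>. \<pi> (\<omega> t)) \<in> measurable M (count_space UNIV)"
  proof
    fix t
    have "(\<lambda>\<omega>. \<omega> t) \<in> measurable PS (count_space UNIV)"
      by (rule measurable_component_singleton) simp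
    then show "(\<lambda>\<omega>. \<pi> (\<omega> t)) \<in> measurable M (count_space UNIV)"
      unfolding M_def measurable_distr_eq1
      by (rule measurable_compose[of _ _ "count_space UNIV"]) simp
  qed
  have 2: "measure M {\<omega> \<in> space M. \<forall>i\<le>n. \<pi> (\<omega> i) = hs ! i}
        = (if hs ! 0 = \<pi> d then 1 else 0) * (\<Prod>i<n. pmf (K (hs ! i)) (hs ! Suc i))"
    if len: "length hs = Suc n" for n hs
  proof -
    have "measure M {\<omega> \<in> space M. \<forall>i\<le>n. \<pi> (\<omega> i) = hs ! i}
        = measure ?S ((\<lambda>\<omega> t. path \<Sigma> d d \<omega> t) -` {\<omega> \<in> space PS. \<forall>i\<le>n. \<pi> (\<omega> i) = hs ! i} \<inter> space ?S)"
      unfolding M_def space_distr by (rule measure_distr[OF fm pi_set_fin])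
    also have "(\<lambda>\<omega> t. path \<Sigma> d d \<omega> t) -` {\<omega> \<in> space PS. \<forall>i\<le>n. \<pi> (\<omega> i) = hs ! i} \<inter> space ?S
        = {\<omega> \<in> space ?S. \<forall>i\<le>n. \<pi> (path \<Sigma> d d \<omega> i) = hs ! i}"
      unfolding space_PiM space_stream_pmf by auto
    also have "measure ?S \<dots> = enn2real (emeasure ?S \<dots>)" by (simp add: measure_def)
    also have "\<dots> = (if \<pi> d = hs ! 0 then 1 else 0) * (\<Prod>i<n. pmf (K (hs ! i)) (hs ! Suc i))"
    proof -
      have nn: "0 \<le> (if \<pi> d = hs ! 0 then 1 else 0) * (\<Prod>i<n. pmf (K (hs ! i)) (hs ! Suc i))"
        by (auto intro!: prod_nonneg)
      show ?thesis by (simp only: fdd[OF fin d hK d len] enn2real_ennreal[OF nn])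
    qed
    finally show ?thesis by (cases "\<pi> d = hs ! 0") auto
  qed
  show ?thesis unfolding is_markov_chain_def using 1 2 by blast
qed

lemma chain_AE:
  assumes fin: "finite \<Sigma>" and d: "d \<in> \<Sigma>" and Q: "\<And>s. s \<in> \<Sigma> \<Longrightarrow> Q s"
  shows "AE \<omega> in distr (stream_space (measure_pmf D)) PS (\<lambda>\<omega> t. path \<Sigma> d d \<omega> t). \<forall>t. Q (\<omega> t)"
proof -
  let ?S = "stream_space (measure_pmf D)"
  have fm: "(\<lambda>\<omega> t. path \<Sigma> d d \<omega> t) \<in> measurable ?S PS"
    by (rule measurable_PiM_single') (simp_all add: path_meas[OF fin d d])
  show ?thesis
    by (subst AE_distr_iff[OF fm pi_set_all]) (rule AE_I2, simp add: Q path_in d)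
qed

theorem mainTheorem13:
  fixes V :: "'a set" and E :: "'a \<Rightarrow> 'a \<Rightarrow> bool"
    and \<delta> r1 r2 :: real and S0 :: "'a set"
  assumes "finite V" and "V \<noteq> {}"
    and "\<And>u v. E u v \<Longrightarrow> u \<in> V \<and> v \<in> V"
    and "\<And>u v. E u v \<Longrightarrow> E v u"
    and "\<And>u. \<not> E u u"
    and "0 \<le> \<delta>" and "\<delta> \<le> 1"
    and "r1 = 1" and "r2 \<ge> r1"
    and "S0 \<subseteq> V"
  shows "\<exists>(M :: (nat \<Rightarrow> 'a set \<times> 'a set) measure) X1 X2.
           prob_space M \<and>
           is_markov_chain M X1 (mixed_step \<delta> V E r1) S0 \<and>
           is_markov_chain M X2 (mixed_step \<delta> V E r2) S0 \<and>
           (AE \<omega> in M. \<forall>t. X1 t \<omega> \<subseteq> X2 t \<omega>)"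
proof -
  note finV = assms(1) and V0 = assms(2)
  have r2: "r2 \<ge> 1" using assms by simp
  define \<Sigma> where "\<Sigma> = {p :: 'a set \<times> 'a set. fst p \<subseteq> snd p \<and> snd p \<subseteq> V}"
  define d where "d = (S0, S0)"
  have d: "d \<in> \<Sigma>" using assms unfolding \<Sigma>_def d_def by auto
  have fin: "finite \<Sigma>"
  proof (rule finite_subset)
    show "\<Sigma> \<subseteq> Pow V \<times> Pow V" unfolding \<Sigma>_def by auto
  qed (use finV in simp)
  let ?K1 = "mixed_step \<delta> V E r1" and ?K2 = "mixed_step \<delta> V E r2"
  define Cpl where "Cpl = (\<lambda>s. SOME C. map_pmf fst C = ?K1 (fst s) \<and> map_pmf snd C = ?K2 (snd s) \<and>
       (\<forall>x\<in>set_pmf C. fst x \<subseteq> snd x))"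
  have Cpl: "map_pmf fst (Cpl s) = ?K1 (fst s) \<and> map_pmf snd (Cpl s) = ?K2 (snd s) \<and>
       (\<forall>x\<in>set_pmf (Cpl s). fst x \<subseteq> snd x)" if "s \<in> \<Sigma>" for s
  proof -
    have "\<exists>C. map_pmf fst C = ?K1 (fst s) \<and> map_pmf snd C = ?K2 (snd s) \<and>
       (\<forall>x\<in>set_pmf C. fst x \<subseteq> snd x)"
      using mixed_coupling[OF finV V0 _ _ r2, of "fst s" "snd s" \<delta> E] that assms(8)
      unfolding \<Sigma>_def by auto
    then show ?thesis unfolding Cpl_def by (rule someI_ex)
  qed
  have Csupp: "x \<in> \<Sigma>" if s: "s \<in> \<Sigma>" and x: "x \<in> set_pmf (Cpl s)" for s x
  proof -
    have "snd x \<in> set_pmf (map_pmf snd (Cpl s))" using x by simp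
    then have "snd x \<in> set_pmf (?K2 (snd s))" using Cpl[OF s] by simp
    moreover have "snd s \<subseteq> V" using s unfolding \<Sigma>_def by auto
    ultimately have "snd x \<subseteq> V" using set_mixed_step[OF finV V0] by blast
    then show ?thesis using Cpl[OF s] x unfolding \<Sigma>_def by auto
  qed
  define D where "D = Pi_pmf \<Sigma> d Cpl"
  have comp: "map_pmf (\<lambda>f. g (clamp \<Sigma> d f s)) D = map_pmf g (Cpl s)" if s: "s \<in> \<Sigma>" for s and g :: "'a set \<times> 'a set \<Rightarrow> 'a set"
  proof -
    have "map_pmf (\<lambda>f. g (clamp \<Sigma> d f s)) D = map_pmf (\<lambda>y. g (if y \<in> \<Sigma> then y else d)) (map_pmf (\<lambda>f. f s) D)"
      by (simp add: pmf.map_comp o_def clamp_def)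
    also have "map_pmf (\<lambda>f. f s) D = Cpl s" unfolding D_def using Pi_pmf_component[OF fin, of s d Cpl] s by simp
    also have "map_pmf (\<lambda>y. g (if y \<in> \<Sigma> then y else d)) (Cpl s) = map_pmf g (Cpl s)"
      by (intro pmf.map_cong refl) (use Csupp[OF s] in auto)
    finally show ?thesis .
  qed
  define M where "M = distr (stream_space (measure_pmf D)) PS (\<lambda>\<omega> t. path \<Sigma> d d \<omega> t)"
  have mc1: "is_markov_chain M (\<lambda>t \<omega>. fst (\<omega> t)) ?K1 (fst d)"
    unfolding M_def by (rule chain_from_stream[OF fin d]) (use comp Cpl in simp)
  have mc2: "is_markov_chain M (\<lambda>t \<omega>. snd (\<omega> t)) ?K2 (snd d)"
    unfolding M_def by (rule chain_from_stream[OF fin d]) (use comp Cpl in simp)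
  have ps: "prob_space M"
    unfolding M_def
  proof (rule prob_space.prob_space_distr)
    show "prob_space (stream_space (measure_pmf D))"
      by (rule prob_space.prob_space_stream_space[OF measure_pmf.prob_space_axioms])
    show "(\<lambda>\<omega> t. path \<Sigma> d d \<omega> t) \<in> measurable (stream_space (measure_pmf D)) PS"
      by (rule measurable_PiM_single') (simp_all add: path_meas[OF fin d d])
  qed
  have ae: "AE \<omega> in M. \<forall>t. fst (\<omega> t) \<subseteq> snd (\<omega> t)"
    unfolding M_def by (rule chain_AE[OF fin d]) (simp add: \<Sigma>_def)
  show ?thesis
    using ps mc1 mc2 ae unfolding d_def by auto
qed

end
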